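(* Assume (A1) and (A3) of the context. Let $\hat\theta_S$ be a minimizer of the restricted problem $$\min_{\theta_S}\ \ell\Big(\begin{bmatrix}\theta_S\\0\end{bmatrix}\Big)+\lambda_{n_p}\sum_{t\in S}\|\theta_t\|$$ (parameters on $S^c$ set to zero). If $d\lambda_{n_p}\le\frac{\lambda_{\min}^2}{20\lambda_{3,\max}}$ and $\max_{t\in E}\|w_t\|\le\frac{\lambda_{n_p}}{4}$, where $w=-\nabla\ell(\theta^* )$, then $\|\theta^*_S-\hat\theta_S\|\le\frac{10}{\lambda_{\min}}\sqrt d\,\lambda_{n_p}$.
   Context: Let $E=\{(u,v):1\le v\le u\le m\}$, $D=b|E|$; $f:\mathbb{R}^m\to\mathbb{R}^D$ a feature map with blocks $f_t\in\mathbb{R}^b$; $\theta=(\theta_t)_{t\in E}$; for $A\subseteq E$, $\theta_A$ is the subvector of blocks in $A$. $\|\cdot\|$: Euclidean/spectral norm; $\Lambda_{\min}$ smallest eigenvalue; for a third-order array $T$, spectral norm $\sup\{|\sum T_{ijk}a_ib_jc_k|:\|a\|=\|b\|=\|c\|=1\}$. Given samples $x_p^{(1..n_p)}$ (from $P$) and $x_q^{(1..n_q)}$ (from $Q$), $\ell(\theta)=-\frac1{n_p}\sum_i\theta^\top f(x_p^{(i)})+\log\big(\frac1{n_q}\sum_i\exp(\theta^\top f(x_q^{(i)}))\big)$. $\theta^*$ is the true parameter of the density ratio model $p(x)=q(x)\exp(\theta^{*\top}f(x))/\mathbb{E}_Q[\exp(\theta^{*\top}f)]$, $S=\{t:\theta^*_t\ne0\}$,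 $S^c=E\setminus S$, $d=|S|$; $\mathcal I=\nabla^2\ell(\theta^* )$, $\mathcal I_{SS}$ its $S\times S$ block. (A1) With probability 1, $\Lambda_{\min}(\mathcal I_{SS})\ge\lambda_{\min}>0$. (A3) With probability 1, for all $\delta$ with $\|\delta\|\le\|\theta^*\|$: $\|\nabla^2\ell(\theta^*+\delta)\|\le\lambda_{\max}<\infty$ and $\max_{t\in E}$ spectral norm of $\nabla_{\theta_t}\nabla^2\ell(\theta^*+\delta)$ $\le\lambda_{3,\max}<\infty$. *)

theory Defs
  imports "HOL-Analysis.Analysis"
begin

text \<open>Parameter vectors theta in R^D are represented as real^'b^'e: one block
  (in R^b, index type 'b) for every edge t in E (index type 'e).  A coordinate of
  R^D is a pair (t, j) :: 'e \<times> 'b.\<close>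

definition vc :: "real^'b^'e \<Rightarrow> 'e \<times> 'b \<Rightarrow> real" where
  "vc a c = a $ fst c $ snd c"

definition unitv :: "'e \<times> 'b \<Rightarrow> real^'b^'e" where
  "unitv c = (\<chi> t j. if (t, j) = c then 1 else 0)"

definition loss :: "('x \<Rightarrow> real^'b^'e) \<Rightarrow> (nat \<Rightarrow> 'x) \<Rightarrow> nat \<Rightarrow> (nat \<Rightarrow> 'x) \<Rightarrow> nat
                     \<Rightarrow> real^'b^'e \<Rightarrow> real" where
  "loss f xp np xq nq \<theta> =
     - (1 / real np) * (\<Sum>i<np. \<theta> \<bullet> f (xp i))
     + ln ((1 / real nq) * (\<Sum>i<nq. exp (\<theta> \<bullet> f (xq i))))"

definition pd :: "(real^'b^'e \<Rightarrow> real) \<Rightarrow> real^'b^'e \<Rightarrow> 'e \<times> 'b \<Rightarrow> real" where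
  "pd g x c = deriv (\<lambda>s. g (x + s *\<^sub>R unitv c)) 0"

definition grad :: "(real^'b^'e \<Rightarrow> real) \<Rightarrow> real^'b^'e \<Rightarrow> 'e \<times> 'b \<Rightarrow> real" where
  "grad g x c = pd g x c"

definition hess :: "(real^'b^'e \<Rightarrow> real) \<Rightarrow> real^'b^'e \<Rightarrow> 'e \<times> 'b \<Rightarrow> 'e \<times> 'b \<Rightarrow> real" where
  "hess g x c c' = pd (\<lambda>y. grad g y c') x c"

definition third :: "(real^'b^'e \<Rightarrow> real) \<Rightarrow> real^'b^'e
                      \<Rightarrow> 'e \<times> 'b \<Rightarrow> 'e \<times> 'b \<Rightarrow> 'e \<times> 'b \<Rightarrow> real" where
  "third g x c c' c'' = pd (\<lambda>y. hess g y c' c'') x c"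

definition matvec :: "('e \<times> 'b \<Rightarrow> 'e \<times> 'b \<Rightarrow> real) \<Rightarrow> real^'b^'e \<Rightarrow> real^'b^'e" where
  "matvec H a = (\<chi> t j. \<Sum>c\<in>UNIV. H (t, j) c * vc a c)"

definition spec2 :: "('e::finite \<times> 'b::finite \<Rightarrow> 'e \<times> 'b \<Rightarrow> real) \<Rightarrow> real" where
  "spec2 H = Sup {norm (matvec H a) | a :: real^'b^'e. norm a = 1}"

definition spec3 :: "('b::finite \<Rightarrow> 'e::finite \<times> 'b \<Rightarrow> 'e \<times> 'b \<Rightarrow> real) \<Rightarrow> real" where
  "spec3 T = Sup {\<bar>\<Sum>j\<in>UNIV. \<Sum>c\<in>UNIV. \<Sum>c'\<in>UNIV. T j c c' * (a $ j) * vc u c * vc v c'\<bar>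
                  | (a :: real^'b) (u :: real^'b^'e) (v :: real^'b^'e).
                    norm a = 1 \<and> norm u = 1 \<and> norm v = 1}"

definition coords :: "'e set \<Rightarrow> ('e \<times> 'b) set" where
  "coords A = {c. fst c \<in> A}"

definition block_eigenvalues :: "('e::finite \<times> 'b::finite \<Rightarrow> 'e \<times> 'b \<Rightarrow> real) \<Rightarrow> 'e set \<Rightarrow> real set" where
  "block_eigenvalues H A =
     {\<mu>. \<exists>v :: 'e \<times> 'b \<Rightarrow> real. (\<exists>c\<in>coords A. v c \<noteq> 0) \<and>
          (\<forall>c\<in>coords A. (\<Sum>c'\<in>coords A. H c c' * v c') = \<mu> * v c)}"

end

theory Submission
  imports Defs
begin

lemma sum_UNIV_pair: "(\<Sum>c\<in>(UNIV::('e::finite\<times>'b::finite) set). g c) = (\<Sum>t\<in>UNIV. \<Sum>j\<in>UNIV. g (t,j))"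
proof -
  have "(\<Sum>c\<in>(UNIV::('e\<times>'b) set). g c) = (\<Sum>c\<in>UNIV \<times> UNIV. g c)" by simp
  also have "\<dots> = (\<Sum>t\<in>UNIV. \<Sum>j\<in>UNIV. g (t,j))" by (subst sum.cartesian_product) simp
  finally show ?thesis .
qed

lemma inner_vc: "(x::real^'b::finite^'e::finite) \<bullet> y = (\<Sum>c\<in>UNIV. vc x c * vc y c)"
  by (simp add: sum_UNIV_pair inner_vec_def vc_def)

lemma vc_unitv: "vc (unitv c) c' = (if c' = c then 1 else 0)"
  by (cases c; cases c'; simp add: vc_def unitv_def)

lemma inner_unitv: "(x::real^'b::finite^'e::finite) \<bullet> unitv c = vc x c"
  by (simp add: inner_vc vc_unitv if_distrib cong: if_cong)

lemma unitv_comp: "unitv c $ t $ j = (if c = (t,j) then 1 else 0)"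
  by (auto simp: unitv_def)

lemma mult01: "(a::real) * (if P then 1 else 0) = (if P then a else 0)" by simp

lemma if_and0: "(if a \<and> b then (c::real) else 0) = (if a then if b then c else 0 else 0)" by simp

lemma vec_expand: "(u::real^'b::finite^'e::finite) = (\<Sum>c\<in>UNIV. vc u c *\<^sub>R unitv c)"
proof -
  have "\<And>t j. (\<Sum>c\<in>UNIV. vc u c *\<^sub>R unitv c) $ t $ j = u $ t $ j"
    by (simp add: sum_component unitv_comp vc_def mult01 sum.delta')
  then show ?thesis by (simp add: vec_eq_iff)
qed

lemma norm_sq_vc: "(norm (x::real^'b::finite^'e::finite))\<^sup>2 = (\<Sum>c\<in>UNIV. (vc x c)\<^sup>2)"
proof -
  have "(norm x)\<^sup>2 = x \<bullet> x" by (rule power2_norm_eq_inner)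
  then show ?thesis by (simp add: inner_vc power2_eq_square)
qed

lemma line_deriv:
  assumes "(g has_derivative g') (at (y + s *\<^sub>R v))"
  shows "((\<lambda>s. g (y + s *\<^sub>R v)) has_real_derivative g' v) (at s)"
proof -
  have lin: "linear g'" using assms by (rule has_derivative_linear)
  have "((\<lambda>s. y + s *\<^sub>R v) has_derivative (\<lambda>h. h *\<^sub>R v)) (at s)"
    by (auto intro!: derivative_eq_intros)
  from diff_chain_at[OF this assms]
  have "((\<lambda>s. g (y + s *\<^sub>R v)) has_derivative (\<lambda>h. g' (h *\<^sub>R v))) (at s)"
    by (simp add: o_def)
  moreover have "(\<lambda>h. g' (h *\<^sub>R v)) = (*) (g' v)"
    using lin by (auto simp: linear_scale)
  ultimately show ?thesis by (simp add: has_field_derivative_def)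
qed

lemma pd_frechet:
  assumes "(g has_derivative g') (at y)"
  shows "pd g y c = g' (unitv c)"
proof -
  have "((\<lambda>s. g (y + s *\<^sub>R unitv c)) has_real_derivative g' (unitv c)) (at 0)"
    by (rule line_deriv) (use assms in simp)
  then show ?thesis unfolding pd_def by (rule DERIV_imp_deriv)
qed

lemma dir_deriv:
  fixes g :: "real^'b::finite^'e::finite \<Rightarrow> real"
  assumes "\<And>y. g differentiable (at y)"
  shows "((\<lambda>s. g (x + s *\<^sub>R u)) has_real_derivative (\<Sum>c\<in>UNIV. vc u c * pd g (x + s *\<^sub>R u) c)) (at s)"
proof -
  obtain g' where g': "(g has_derivative g') (at (x + s *\<^sub>R u))"
    using assms unfolding differentiable_def by blast
  have lin: "linear g'" using g' by (rule has_derivative_linear)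
  have "g' u = g' (\<Sum>c\<in>UNIV. vc u c *\<^sub>R unitv c)" by (subst vec_expand) simp
  also have "\<dots> = (\<Sum>c\<in>UNIV. vc u c * g' (unitv c))"
    using lin by (simp add: linear_sum linear_scale)
  also have "\<dots> = (\<Sum>c\<in>UNIV. vc u c * pd g (x + s *\<^sub>R u) c)"
    using pd_frechet[OF g'] by simp
  finally show ?thesis using line_deriv[OF g'] by simp
qed

definition Zq :: "('x \<Rightarrow> real^'b^'e) \<Rightarrow> (nat \<Rightarrow> 'x) \<Rightarrow> nat \<Rightarrow> real^'b^'e \<Rightarrow> real" where
  "Zq f xq nq y = (\<Sum>i<nq. exp (y \<bullet> f (xq i)))"

lemma Zq_pos: "nq \<ge> 1 \<Longrightarrow> Zq f xq nq y > 0"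
  unfolding Zq_def by (rule sum_pos) (auto simp: lessThan_empty_iff)

lemma loss_deriv:
  assumes "nq \<ge> 1"
  shows "(loss f xp np xq nq has_derivative
     (\<lambda>h. - (1 / real np) * (\<Sum>i<np. h \<bullet> f (xp i))
          + (\<Sum>i<nq. exp (y \<bullet> f (xq i)) * (h \<bullet> f (xq i))) / Zq f xq nq y)) (at y)"
proof -
  have pos: "(1 / real nq) * (\<Sum>i<nq. exp (y \<bullet> f (xq i))) > 0"
    using Zq_pos[OF assms, of f xq y] assms unfolding Zq_def by (intro mult_pos_pos) auto
  have d1: "((\<lambda>\<theta>. \<Sum>i<np. \<theta> \<bullet> f (xp i)) has_derivative (\<lambda>h. \<Sum>i<np. h \<bullet> f (xp i))) (at y)"
    by (intro has_derivative_sum has_derivative_inner_left has_derivative_ident)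
  have d2: "((\<lambda>\<theta>. \<Sum>i<nq. exp (\<theta> \<bullet> f (xq i))) has_derivative
      (\<lambda>h. \<Sum>i<nq. (h \<bullet> f (xq i)) * exp (y \<bullet> f (xq i)))) (at y)"
    by (intro has_derivative_sum has_derivative_exp has_derivative_inner_left has_derivative_ident)
  have d3: "((\<lambda>\<theta>. ln ((1 / real nq) * (\<Sum>i<nq. exp (\<theta> \<bullet> f (xq i))))) has_derivative
      (\<lambda>h. ((1 / real nq) * (\<Sum>i<nq. (h \<bullet> f (xq i)) * exp (y \<bullet> f (xq i)))) *
         inverse ((1 / real nq) * (\<Sum>i<nq. exp (y \<bullet> f (xq i)))))) (at y)"
    by (rule has_derivative_ln[OF pos has_derivative_mult_right[OF d2]])
  note d4 = has_derivative_add[OF has_derivative_mult_right[OF d1, of "- (1 / real np)"] d3]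
  show ?thesis
    unfolding loss_def[abs_def]
    apply (rule has_derivative_eq_rhs[OF d4])
    using assms by (auto simp: fun_eq_iff Zq_def field_simps)
qed

definition Nq :: "('x \<Rightarrow> real^'b^'e) \<Rightarrow> (nat \<Rightarrow> 'x) \<Rightarrow> nat \<Rightarrow> real^'b^'e \<Rightarrow> 'e \<times> 'b \<Rightarrow> real" where
  "Nq f xq nq y c = (\<Sum>i<nq. exp (y \<bullet> f (xq i)) * vc (f (xq i)) c)"

definition Nq2 :: "('x \<Rightarrow> real^'b^'e) \<Rightarrow> (nat \<Rightarrow> 'x) \<Rightarrow> nat \<Rightarrow> real^'b^'e \<Rightarrow> 'e \<times> 'b \<Rightarrow> 'e \<times> 'b \<Rightarrow> real" where
  "Nq2 f xq nq y c c' = (\<Sum>i<nq. exp (y \<bullet> f (xq i)) * vc (f (xq i)) c * vc (f (xq i)) c')"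

definition G1 :: "('x \<Rightarrow> real^'b^'e) \<Rightarrow> (nat \<Rightarrow> 'x) \<Rightarrow> nat \<Rightarrow> (nat \<Rightarrow> 'x) \<Rightarrow> nat \<Rightarrow> real^'b^'e \<Rightarrow> 'e \<times> 'b \<Rightarrow> real" where
  "G1 f xp np xq nq y c = - (1 / real np) * (\<Sum>i<np. vc (f (xp i)) c) + Nq f xq nq y c / Zq f xq nq y"

definition HH :: "('x \<Rightarrow> real^'b^'e) \<Rightarrow> (nat \<Rightarrow> 'x) \<Rightarrow> nat \<Rightarrow> real^'b^'e \<Rightarrow> 'e \<times> 'b \<Rightarrow> 'e \<times> 'b \<Rightarrow> real" where
  "HH f xq nq y c c' = Nq2 f xq nq y c c' / Zq f xq nq y - Nq f xq nq y c * Nq f xq nq y c' / (Zq f xq nq y * Zq f xq nq y)"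

lemma grad_eq:
  fixes f :: "'x \<Rightarrow> real^'b::finite^'e::finite"
  assumes "nq \<ge> 1"
  shows "grad (loss f xp np xq nq) y c = G1 f xp np xq nq y c"
  unfolding grad_def pd_frechet[OF loss_deriv[OF assms]] G1_def Nq_def
  by (simp add: inner_commute[of "unitv c"] inner_unitv mult.commute)

lemma Zq_deriv: "(Zq f xq nq has_derivative (\<lambda>h. \<Sum>i<nq. (h \<bullet> f (xq i)) * exp (y \<bullet> f (xq i)))) (at y)"
  unfolding Zq_def[abs_def]
  by (intro has_derivative_sum has_derivative_exp has_derivative_inner_left has_derivative_ident)

lemma Nq_deriv: "((\<lambda>y. Nq f xq nq y c) has_derivative (\<lambda>h. \<Sum>i<nq. (h \<bullet> f (xq i)) * exp (y \<bullet> f (xq i)) * vc (f (xq i)) c)) (at y)"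
  unfolding Nq_def[abs_def]
  by (intro has_derivative_sum has_derivative_exp has_derivative_inner_left has_derivative_ident has_derivative_mult_left)

lemma Nq2_deriv: "((\<lambda>y. Nq2 f xq nq y c c') has_derivative (\<lambda>h. \<Sum>i<nq. (h \<bullet> f (xq i)) * exp (y \<bullet> f (xq i)) * vc (f (xq i)) c * vc (f (xq i)) c')) (at y)"
  unfolding Nq2_def[abs_def]
  by (intro has_derivative_sum has_derivative_exp has_derivative_inner_left has_derivative_ident has_derivative_mult_left)

lemma loss_diff:
  assumes "nq \<ge> 1"
  shows "loss f xp np xq nq differentiable (at y)"
  unfolding differentiable_def using loss_deriv[OF assms] by blast

lemma G1_deriv:
  assumes "nq \<ge> 1"
  shows "((\<lambda>y. G1 f xp np xq nq y c) has_derivative (\<lambda>h.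
     ((\<Sum>i<nq. (h \<bullet> f (xq i)) * exp (y \<bullet> f (xq i)) * vc (f (xq i)) c) * Zq f xq nq y
      - Nq f xq nq y c * (\<Sum>i<nq. (h \<bullet> f (xq i)) * exp (y \<bullet> f (xq i))))
      / (Zq f xq nq y * Zq f xq nq y))) (at y)"
proof -
  have nz: "Zq f xq nq y \<noteq> 0" using Zq_pos[OF assms] by (metis less_irrefl)
  note d = has_derivative_add[OF has_derivative_const[of "- (1 / real np) * (\<Sum>i<np. vc (f (xp i)) c)"]
      has_derivative_divide'[OF Nq_deriv Zq_deriv nz]]
  show ?thesis unfolding G1_def[abs_def]
    by (rule has_derivative_eq_rhs[OF d]) simp
qed

lemma G1_diff:
  assumes "nq \<ge> 1"
  shows "(\<lambda>y. G1 f xp np xq nq y c) differentiable (at y)"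
  unfolding differentiable_def using G1_deriv[OF assms] by blast

lemma hess_eq:
  fixes f :: "'x \<Rightarrow> real^'b::finite^'e::finite"
  assumes "nq \<ge> 1"
  shows "hess (loss f xp np xq nq) y c c' = HH f xq nq y c c'"
proof -
  have "(\<lambda>y. grad (loss f xp np xq nq) y c') = (\<lambda>y. G1 f xp np xq nq y c')"
    by (rule ext) (rule grad_eq[OF assms])
  then have "hess (loss f xp np xq nq) y c c' = pd (\<lambda>y. G1 f xp np xq nq y c') y c"
    unfolding hess_def by simp
  also have "\<dots> = HH f xq nq y c c'"
    unfolding pd_frechet[OF G1_deriv[OF assms]] HH_def Nq2_def Nq_def
    using Zq_pos[OF assms, of f xq y]
    by (simp add: inner_commute[of "unitv c"] inner_unitv field_simps power2_eq_square)
  finally show ?thesis .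
qed

lemma HH_diff:
  assumes "nq \<ge> 1"
  shows "(\<lambda>y. HH f xq nq y c c') differentiable (at y)"
proof -
  have nz: "Zq f xq nq y \<noteq> 0" using Zq_pos[OF assms] by (metis less_irrefl)
  show ?thesis
    unfolding differentiable_def HH_def[abs_def]
    by (rule exI, rule has_derivative_diff[OF has_derivative_divide'[OF Nq2_deriv Zq_deriv nz]
          has_derivative_divide'[OF has_derivative_mult[OF Nq_deriv Nq_deriv]
            has_derivative_mult[OF Zq_deriv Zq_deriv]]]) (use nz in simp)
qed

lemma lin_Nq: "(\<Sum>c\<in>UNIV. vc u c * Nq f xq nq z c) = (\<Sum>i<nq. exp (z \<bullet> f (xq i)) * (u \<bullet> f (xq i)))"
  unfolding Nq_def inner_vc sum_distrib_left
  by (subst sum.swap) (simp add: mult_ac)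

lemma quad_Nq2: "(\<Sum>c\<in>UNIV. vc u c * (\<Sum>c'\<in>UNIV. vc u c' * Nq2 f xq nq z c' c))
   = (\<Sum>i<nq. exp (z \<bullet> f (xq i)) * (u \<bullet> f (xq i))\<^sup>2)"
proof -
  have "(\<Sum>c\<in>UNIV. vc u c * (\<Sum>c'\<in>UNIV. vc u c' * Nq2 f xq nq z c' c))
     = (\<Sum>c\<in>UNIV. vc u c * (\<Sum>i<nq. exp (z \<bullet> f (xq i)) * (u \<bullet> f (xq i)) * vc (f (xq i)) c))"
    unfolding Nq2_def inner_vc sum_distrib_left sum_distrib_right
    by (rule sum.cong[OF refl], subst sum.swap) (simp add: mult_ac)
  also have "\<dots> = (\<Sum>i<nq. exp (z \<bullet> f (xq i)) * (u \<bullet> f (xq i)) * (u \<bullet> f (xq i)))"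
    unfolding inner_vc[of u "f (xq _)"] sum_distrib_left sum_distrib_right
    by (subst sum.swap) (simp add: mult_ac)
  finally show ?thesis by (simp add: power2_eq_square mult_ac)
qed

lemma quad_HH: "(\<Sum>c\<in>UNIV. vc u c * (\<Sum>c'\<in>UNIV. vc u c' * HH f xq nq z c' c))
   = (\<Sum>i<nq. exp (z \<bullet> f (xq i)) * (u \<bullet> f (xq i))\<^sup>2) / Zq f xq nq z
     - (\<Sum>i<nq. exp (z \<bullet> f (xq i)) * (u \<bullet> f (xq i)))\<^sup>2 / (Zq f xq nq z * Zq f xq nq z)"
proof -
  define Z where "Z = Zq f xq nq z"
  have e1: "(\<Sum>c'\<in>UNIV. vc u c' * HH f xq nq z c' c)
      = (\<Sum>c'\<in>UNIV. vc u c' * Nq2 f xq nq z c' c) / Z - (\<Sum>c'\<in>UNIV. vc u c' * Nq f xq nq z c') * Nq f xq nq z c / (Z * Z)" for c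
    unfolding HH_def Z_def[symmetric] right_diff_distrib sum_subtractf sum_divide_distrib sum_distrib_right
    by (simp add: mult_ac)
  have "(\<Sum>c\<in>UNIV. vc u c * (\<Sum>c'\<in>UNIV. vc u c' * HH f xq nq z c' c))
     = (\<Sum>c\<in>UNIV. vc u c * (\<Sum>c'\<in>UNIV. vc u c' * Nq2 f xq nq z c' c)) / Z
       - (\<Sum>c'\<in>UNIV. vc u c' * Nq f xq nq z c') * (\<Sum>c\<in>UNIV. vc u c * Nq f xq nq z c) / (Z * Z)"
    unfolding e1 right_diff_distrib sum_subtractf sum_divide_distrib sum_distrib_left
    by (simp add: mult_ac)
  then show ?thesis unfolding quad_Nq2 lin_Nq Z_def by (simp add: power2_eq_square)
qed

lemma quad_HH_nonneg:
  assumes "nq \<ge> 1"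
  shows "(\<Sum>c\<in>UNIV. vc u c * (\<Sum>c'\<in>UNIV. vc u c' * HH f xq nq z c' c)) \<ge> 0"
proof -
  define E where "E i = exp (z \<bullet> f (xq i))" for i
  define b where "b i = u \<bullet> f (xq i)" for i
  define Z where "Z = Zq f xq nq z"
  have Z: "Z = (\<Sum>i<nq. E i)" unfolding Z_def Zq_def E_def ..
  have Zp: "Z > 0" unfolding Z_def by (rule Zq_pos[OF assms])
  have "(\<Sum>i<nq. sqrt (E i) * (sqrt (E i) * b i))\<^sup>2 \<le> (\<Sum>i<nq. (sqrt (E i))\<^sup>2) * (\<Sum>i<nq. (sqrt (E i) * b i)\<^sup>2)"
    by (rule Cauchy_Schwarz_ineq_sum)
  moreover have "\<And>i. sqrt (E i) * (sqrt (E i) * b i) = E i * b i" "\<And>i. (sqrt (E i))\<^sup>2 = E i"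
    "\<And>i. (sqrt (E i) * b i)\<^sup>2 = E i * (b i)\<^sup>2"
    by (auto simp: E_def power_mult_distrib mult.assoc[symmetric])
  ultimately have cs: "(\<Sum>i<nq. E i * b i)\<^sup>2 \<le> Z * (\<Sum>i<nq. E i * (b i)\<^sup>2)" unfolding Z by simp
  have "(\<Sum>i<nq. E i * (b i)\<^sup>2) / Z - (\<Sum>i<nq. E i * b i)\<^sup>2 / (Z * Z)
     = (Z * (\<Sum>i<nq. E i * (b i)\<^sup>2) - (\<Sum>i<nq. E i * b i)\<^sup>2) / (Z * Z)"
    using Zp by (simp add: field_simps)
  also have "\<dots> \<ge> 0" using cs Zp by (intro divide_nonneg_pos) auto
  finally show ?thesis unfolding quad_HH E_def b_def Z_def .
qed

lemma psi1:
  fixes f :: "'x \<Rightarrow> real^'b::finite^'e::finite"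
  assumes "nq \<ge> 1"
  shows "((\<lambda>s. loss f xp np xq nq (x + s *\<^sub>R u)) has_real_derivative
     (\<Sum>c\<in>UNIV. vc u c * grad (loss f xp np xq nq) (x + s *\<^sub>R u) c)) (at s)"
  unfolding grad_def by (rule dir_deriv) (rule loss_diff[OF assms])

lemma psi2:
  fixes f :: "'x \<Rightarrow> real^'b::finite^'e::finite"
  assumes "nq \<ge> 1"
  shows "((\<lambda>s. \<Sum>c\<in>UNIV. vc u c * grad (loss f xp np xq nq) (x + s *\<^sub>R u) c) has_real_derivative
     (\<Sum>c\<in>UNIV. vc u c * (\<Sum>c'\<in>UNIV. vc u c' * hess (loss f xp np xq nq) (x + s *\<^sub>R u) c' c))) (at s)"
proof -
  have d: "(\<lambda>y. grad (loss f xp np xq nq) y c) differentiable (at y)" for c y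
    unfolding grad_eq[OF assms] by (rule G1_diff[OF assms])
  show ?thesis
    unfolding hess_def
    by (intro DERIV_sum DERIV_cmult dir_deriv d)
qed

lemma psi3:
  fixes f :: "'x \<Rightarrow> real^'b::finite^'e::finite"
  assumes "nq \<ge> 1"
  shows "((\<lambda>s. \<Sum>c\<in>UNIV. vc u c * (\<Sum>c'\<in>UNIV. vc u c' * hess (loss f xp np xq nq) (x + s *\<^sub>R u) c' c)) has_real_derivative
     (\<Sum>c\<in>UNIV. vc u c * (\<Sum>c'\<in>UNIV. vc u c' * (\<Sum>c0\<in>UNIV. vc u c0 * third (loss f xp np xq nq) (x + s *\<^sub>R u) c0 c' c)))) (at s)"
proof -
  have d: "(\<lambda>y. hess (loss f xp np xq nq) y c' c) differentiable (at y)" for c c' y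
    unfolding hess_eq[OF assms] by (rule HH_diff[OF assms])
  show ?thesis
    unfolding third_def
    by (intro DERIV_sum DERIV_cmult dir_deriv d)
qed

lemma vc_add: "vc (x + y) c = vc x c + vc y c" by (simp add: vc_def)
lemma vc_scale: "vc (a *\<^sub>R x) c = a * vc x c" by (simp add: vc_def)
lemma mult01': "(if P then 1 else 0) * (a::real) = (if P then a else 0)" by simp

lemma quad_zero_lin:
  fixes a b :: real
  assumes "\<And>t. a * t + b * t\<^sup>2 \<ge> 0"
  shows "a = 0"
proof (rule ccontr)
  assume a: "a \<noteq> 0"
  define k where "k = \<bar>b\<bar> + 1"
  have k: "k > 0" "b \<le> k - 1" unfolding k_def by auto
  have "a * (- a / k) + b * (- a / k)\<^sup>2 = a\<^sup>2 * (b - k) / k\<^sup>2"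
    using k by (simp add: field_simps power2_eq_square)
  also have "\<dots> < 0" using a k
    by (intro divide_neg_pos mult_pos_neg) auto
  finally show False using assms[of "- a / k"] by simp
qed

definition bform :: "('e \<times> 'b \<Rightarrow> 'e \<times> 'b \<Rightarrow> real) \<Rightarrow> real^'b^'e \<Rightarrow> real^'b^'e \<Rightarrow> real" where
  "bform H x y = (\<Sum>c\<in>UNIV. vc x c * (\<Sum>c'\<in>UNIV. vc y c' * H c' c))"

lemma bform_sym:
  assumes "\<And>c c'. H c c' = H c' c"
  shows "bform H x y = bform H (y::real^'b::finite^'e::finite) x"
  unfolding bform_def sum_distrib_left
  by (subst sum.swap) (simp add: mult_ac assms[of _ "_::'e\<times>'b"])

lemma bform_expand:
  "bform H (v + t *\<^sub>R w) (v + t *\<^sub>R w) = bform H v v + t * bform H w v + t * bform H v w + t\<^sup>2 * bform H w w"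
  unfolding bform_def vc_add vc_scale
  by (simp add: algebra_simps sum.distrib sum_distrib_left power2_eq_square)

lemma bform_scale: "bform H (a *\<^sub>R x) (a *\<^sub>R x) = a\<^sup>2 * bform H x x"
  unfolding bform_def vc_scale
  by (simp add: sum_distrib_left power2_eq_square mult_ac)

lemma bform_zero: "bform H 0 0 = 0" by (simp add: bform_def vc_def)

lemma eig_bound:
  fixes H :: "'e::finite \<times> 'b::finite \<Rightarrow> 'e \<times> 'b \<Rightarrow> real" and u :: "real^'b^'e"
  assumes sym: "\<And>c c'. H c c' = H c' c"
    and A1: "\<forall>\<mu>\<in>block_eigenvalues H S. \<mu> \<ge> lmin"
    and supp: "\<forall>t. t \<notin> S \<longrightarrow> u $ t = 0"
  shows "bform H u u \<ge> lmin * (norm u)\<^sup>2"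
proof (cases "u = 0")
  case True then show ?thesis by (simp add: bform_zero)
next
  case False
  define K where "K = {x::real^'b^'e. norm x = 1 \<and> (\<forall>t. t \<notin> S \<longrightarrow> x $ t = 0)}"
  have uK: "u /\<^sub>R norm u \<in> K" using False supp by (auto simp: K_def)
  have clK: "closed K" unfolding K_def
    by (intro closed_Collect_conj closed_Collect_all closed_Collect_imp closed_Collect_eq continuous_intros)
       auto
  have bK: "bounded K" unfolding K_def bounded_iff by auto
  have cK: "compact K" using clK bK by (simp add: compact_eq_bounded_closed)
  have contQ: "continuous_on K (\<lambda>x. bform H x x)"
    unfolding bform_def vc_def by (intro continuous_intros)
  obtain v where vK: "v \<in> K" and vmin: "\<forall>x\<in>K. bform H v v \<le> bform H x x"
    using continuous_attains_inf[OF cK _ contQ] uK by blast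
  define \<mu> where "\<mu> = bform H v v"
  have hom: "bform H x x \<ge> \<mu> * (norm x)\<^sup>2" if xs: "\<forall>t. t \<notin> S \<longrightarrow> x $ t = 0" for x
  proof (cases "x = 0")
    case True then show ?thesis by (simp add: bform_zero)
  next
    case False
    have "x /\<^sub>R norm x \<in> K" using False xs by (auto simp: K_def)
    then have "\<mu> \<le> bform H (x /\<^sub>R norm x) (x /\<^sub>R norm x)" using vmin \<mu>_def by auto
    also have "\<dots> = bform H x x / (norm x)\<^sup>2" by (simp add: bform_scale power_divide field_simps)
    finally show ?thesis using False by (simp add: field_simps)
  qed
  have nv: "norm v = 1" and vs: "\<forall>t. t \<notin> S \<longrightarrow> v $ t = 0" using vK by (auto simp: K_def)
  have eig: "(\<Sum>c'\<in>coords S. H c0 c' * vc v c') = \<mu> * vc v c0" if c0: "c0 \<in> coords S" for c0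
  proof -
    define w where "w = unitv c0"
    have ws: "\<forall>t. t \<notin> S \<longrightarrow> w $ t = 0" using c0 by (cases c0) (auto simp: w_def unitv_def coords_def vec_eq_iff)
    have bwv: "bform H w v = (\<Sum>c'\<in>UNIV. H c0 c' * vc v c')"
      unfolding bform_def w_def vc_unitv by (simp add: mult01' sum.delta' sym[of c0] mult.commute)
    have bvw: "bform H v w = bform H w v" by (rule bform_sym[OF sym])
    have vv: "v \<bullet> v = 1" using nv by (simp add: norm_eq_1)
    have ww: "w \<bullet> w = 1" by (simp add: w_def inner_unitv vc_unitv)
    have vw: "v \<bullet> w = vc v c0" by (simp add: w_def inner_unitv)
    have "a * t + b * t\<^sup>2 \<ge> 0" if "a = 2 * bform H w v - 2 * \<mu> * vc v c0" "b = bform H w w - \<mu>" for a b t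
    proof -
      have "\<forall>t'. t' \<notin> S \<longrightarrow> (v + t *\<^sub>R w) $ t' = 0" using vs ws by simp
      from hom[OF this]
      have "bform H (v + t *\<^sub>R w) (v + t *\<^sub>R w) \<ge> \<mu> * (norm (v + t *\<^sub>R w))\<^sup>2" .
      moreover have "(norm (v + t *\<^sub>R w))\<^sup>2 = 1 + 2 * t * vc v c0 + t\<^sup>2"
        unfolding power2_norm_eq_inner using vv ww vw
        by (simp add: inner_add_left inner_add_right inner_commute[of w v] power2_eq_square algebra_simps)
      ultimately show ?thesis unfolding bform_expand bvw that \<mu>_def[symmetric]
        by (simp add: algebra_simps)
    qed
    from quad_zero_lin[OF this[OF refl refl]]
    have "bform H w v = \<mu> * vc v c0" by simp
    moreover have "(\<Sum>c'\<in>UNIV. H c0 c' * vc v c') = (\<Sum>c'\<in>coords S. H c0 c' * vc v c')"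
      using vs by (intro sum.mono_neutral_right) (auto simp: coords_def vc_def)
    ultimately show ?thesis using bwv by simp
  qed
  have "v \<noteq> 0" using nv by auto
  then obtain t j where "v $ t $ j \<noteq> 0" by (auto simp: vec_eq_iff)
  then have nz: "\<exists>c\<in>coords S. vc v c \<noteq> 0" using vs
    by (intro bexI[of _ "(t,j)"]) (auto simp: vc_def coords_def)
  have "\<mu> \<in> block_eigenvalues H S"
    unfolding block_eigenvalues_def using nz eig by blast
  then have "\<mu> \<ge> lmin" using A1 by blast
  then have "lmin * (norm u)\<^sup>2 \<le> \<mu> * (norm u)\<^sup>2" by (intro mult_right_mono) auto
  also have "\<dots> \<le> bform H u u" using hom supp by blast
  finally show ?thesis .
qed

lemma abs_vc_le: "\<bar>vc (u::real^'b::finite^'e::finite) c\<bar> \<le> norm u"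
proof -
  have "\<bar>u $ fst c $ snd c\<bar> \<le> norm (u $ fst c)" by (rule component_le_norm_cart)
  also have "\<dots> \<le> norm u" by (rule Finite_Cartesian_Product.norm_nth_le)
  finally show ?thesis by (simp add: vc_def)
qed

definition tri :: "('b::finite \<Rightarrow> 'e::finite \<times> 'b \<Rightarrow> 'e \<times> 'b \<Rightarrow> real) \<Rightarrow> real^'b \<Rightarrow> real^'b^'e \<Rightarrow> real^'b^'e \<Rightarrow> real" where
  "tri T a u v = (\<Sum>j\<in>UNIV. \<Sum>c\<in>UNIV. \<Sum>c'\<in>UNIV. T j c c' * (a $ j) * vc u c * vc v c')"

lemma tri_le_M:
  assumes "norm a \<le> 1" "norm u \<le> 1" "norm v \<le> 1"
  shows "\<bar>tri T a u v\<bar> \<le> (\<Sum>j\<in>UNIV. \<Sum>c\<in>UNIV. \<Sum>c'\<in>UNIV. \<bar>T j c c'\<bar>)"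
proof -
  have "\<bar>tri T a u v\<bar> \<le> (\<Sum>j\<in>UNIV. \<bar>\<Sum>c\<in>UNIV. \<Sum>c'\<in>UNIV. T j c c' * (a $ j) * vc u c * vc v c'\<bar>)"
    unfolding tri_def by (rule sum_abs)
  also have "\<dots> \<le> (\<Sum>j\<in>UNIV. \<Sum>c\<in>UNIV. \<bar>\<Sum>c'\<in>UNIV. T j c c' * (a $ j) * vc u c * vc v c'\<bar>)"
    by (intro sum_mono sum_abs)
  also have "\<dots> \<le> (\<Sum>j\<in>UNIV. \<Sum>c\<in>UNIV. \<Sum>c'\<in>UNIV. \<bar>T j c c' * (a $ j) * vc u c * vc v c'\<bar>)"
    by (intro sum_mono sum_abs)
  also have "\<dots> \<le> (\<Sum>j\<in>UNIV. \<Sum>c\<in>UNIV. \<Sum>c'\<in>UNIV. \<bar>T j c c'\<bar>)"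
  proof (intro sum_mono)
    fix j c c'
    have "\<bar>a $ j\<bar> \<le> 1" using component_le_norm_cart[of a j] assms by simp
    moreover have "\<bar>vc u c\<bar> \<le> 1" using abs_vc_le[of u c] assms by simp
    moreover have "\<bar>vc v c'\<bar> \<le> 1" using abs_vc_le[of v c'] assms by simp
    ultimately have "\<bar>a $ j\<bar> * \<bar>vc u c\<bar> * \<bar>vc v c'\<bar> \<le> 1"
      by (metis abs_ge_zero mult_le_one)
    then have "\<bar>T j c c'\<bar> * (\<bar>a $ j\<bar> * \<bar>vc u c\<bar> * \<bar>vc v c'\<bar>) \<le> \<bar>T j c c'\<bar> * 1"
      by (intro mult_left_mono) auto
    then show "\<bar>T j c c' * (a $ j) * vc u c * vc v c'\<bar> \<le> \<bar>T j c c'\<bar>"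
      by (simp add: abs_mult mult_ac)
  qed
  finally show ?thesis .
qed

lemma spec3_upper:
  assumes "norm a = 1" "norm u = 1" "norm v = 1"
  shows "\<bar>tri T a u v\<bar> \<le> spec3 T"
  unfolding spec3_def tri_def[symmetric]
proof (rule cSup_upper)
  show "\<bar>tri T a u v\<bar> \<in> {\<bar>tri T a u v\<bar> |a u v. norm a = 1 \<and> norm u = 1 \<and> norm v = 1}"
    using assms by blast
  show "bdd_above {\<bar>tri T a u v\<bar> |a u v. norm a = 1 \<and> norm u = 1 \<and> norm v = 1}"
    by (rule bdd_aboveI[where M="\<Sum>j\<in>UNIV. \<Sum>c\<in>UNIV. \<Sum>c'\<in>UNIV. \<bar>T j c c'\<bar>"]) (auto intro!: tri_le_M)
qed

lemma tri_scale: "tri T (x *\<^sub>R a) (y *\<^sub>R u) (z *\<^sub>R v) = x * y * z * tri T a u v"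
  unfolding tri_def vc_scale by (simp add: sum_distrib_left mult_ac)

lemma unit_exists: "\<exists>a::real^'n::finite. norm a = 1"
  by (rule exI[of _ "axis undefined 1"]) simp

lemma spec3_nonneg: "spec3 (T::'b::finite \<Rightarrow> 'e::finite \<times> 'b \<Rightarrow> 'e \<times> 'b \<Rightarrow> real) \<ge> 0"
proof -
  obtain a :: "real^'b" where a: "norm a = 1" using unit_exists by blast
  obtain u :: "real^'b^'e" where u: "norm u = 1"
    using exI[of "\<lambda>u::real^'b^'e. norm u = 1" "axis undefined (axis undefined 1)"] by auto
  show ?thesis using spec3_upper[OF a u u, of T] by linarith
qed

lemma spec3_bound:
  "\<bar>tri T a u v\<bar> \<le> spec3 T * norm a * norm u * norm v"
proof (cases "a = 0 \<or> u = 0 \<or> v = 0")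
  case True
  then have "tri T a u v = 0" by (auto simp: tri_def vc_def)
  then show ?thesis using spec3_nonneg[of T] by simp
next
  case False
  then have p: "norm a > 0" "norm u > 0" "norm v > 0" by auto
  have "tri T a u v = norm a * norm u * norm v * tri T (a /\<^sub>R norm a) (u /\<^sub>R norm u) (v /\<^sub>R norm v)"
    using p by (simp add: tri_scale field_simps)
  moreover have "\<bar>tri T (a /\<^sub>R norm a) (u /\<^sub>R norm u) (v /\<^sub>R norm v)\<bar> \<le> spec3 T"
    using p by (intro spec3_upper) auto
  ultimately show ?thesis using p by (simp add: abs_mult mult_left_mono mult_ac)
qed



lemma lower_from_deriv:
  fixes \<psi>2 \<psi>3 :: "real \<Rightarrow> real"
  assumes d: "\<And>s. (\<psi>2 has_real_derivative \<psi>3 s) (at s)"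
    and b: "\<And>s. 0 \<le> s \<Longrightarrow> s \<le> \<sigma> \<Longrightarrow> \<bar>\<psi>3 s\<bar> \<le> M"
    and s: "0 \<le> s" "s \<le> \<sigma>"
  shows "\<psi>2 s \<ge> \<psi>2 0 - M * s"
proof -
  have "(\<lambda>x. \<psi>2 x + M * x) 0 \<le> (\<lambda>x. \<psi>2 x + M * x) s"
  proof (rule DERIV_nonneg_imp_nondecreasing[OF s(1)])
    fix x assume x: "0 \<le> x" "x \<le> s"
    have "((\<lambda>x. \<psi>2 x + M * x) has_real_derivative \<psi>3 x + M) (at x)"
      by (auto intro!: derivative_eq_intros d)
    moreover have "\<psi>3 x + M \<ge> 0" using b[of x] x s by linarith
    ultimately show "\<exists>y. ((\<lambda>x. \<psi>2 x + M * x) has_real_derivative y) (at x) \<and> y \<ge> 0" by blast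
  qed
  then show ?thesis by simp
qed

lemma core1d:
  fixes \<psi> \<psi>1 \<psi>2 :: "real \<Rightarrow> real"
  assumes d1: "\<And>s. (\<psi> has_real_derivative \<psi>1 s) (at s)"
    and d2: "\<And>s. (\<psi>1 has_real_derivative \<psi>2 s) (at s)"
    and cvx: "\<And>s. \<psi>2 s \<ge> 0"
    and \<sigma>: "0 \<le> \<sigma>" "\<sigma> \<le> 1" and k: "k \<ge> 0"
    and kb: "\<And>s. 0 \<le> s \<Longrightarrow> s \<le> \<sigma> \<Longrightarrow> \<psi>2 s \<ge> k"
  shows "\<psi> 1 - \<psi> 0 \<ge> \<psi>1 0 + k * \<sigma> / 2"
proof -
  have h: "\<psi>1 s - k * s \<ge> \<psi>1 0" if s: "0 \<le> s" "s \<le> \<sigma>" for s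
  proof -
    have "(\<lambda>x. \<psi>1 x - k * x) 0 \<le> (\<lambda>x. \<psi>1 x - k * x) s"
    proof (rule DERIV_nonneg_imp_nondecreasing[OF s(1)])
      fix x assume x: "0 \<le> x" "x \<le> s"
      have "((\<lambda>x. \<psi>1 x - k * x) has_real_derivative \<psi>2 x - k) (at x)"
        by (auto intro!: derivative_eq_intros d2)
      moreover have "\<psi>2 x - k \<ge> 0" using kb[of x] x s by linarith
      ultimately show "\<exists>y. ((\<lambda>x. \<psi>1 x - k * x) has_real_derivative y) (at x) \<and> y \<ge> 0" by blast
    qed
    then show ?thesis by simp
  qed
  have mono1: "\<psi>1 a \<le> \<psi>1 b" if "a \<le> b" for a b
  proof (rule DERIV_nonneg_imp_nondecreasing[OF that])
    fix x show "\<exists>y. (\<psi>1 has_real_derivative y) (at x) \<and> y \<ge> 0" using d2 cvx by blast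
  qed
  have g: "(\<lambda>x. \<psi> x - \<psi>1 0 * x - k * x\<^sup>2 / 2) 0 \<le> (\<lambda>x. \<psi> x - \<psi>1 0 * x - k * x\<^sup>2 / 2) \<sigma>"
  proof (rule DERIV_nonneg_imp_nondecreasing[OF \<sigma>(1)])
    fix x assume x: "0 \<le> x" "x \<le> \<sigma>"
    have "((\<lambda>x. \<psi> x - \<psi>1 0 * x - k * x\<^sup>2 / 2) has_real_derivative \<psi>1 x - \<psi>1 0 - k * x) (at x)"
      by (auto intro!: derivative_eq_intros d1 simp: power2_eq_square algebra_simps)
    moreover have "\<psi>1 x - \<psi>1 0 - k * x \<ge> 0" using h[OF x] by linarith
    ultimately show "\<exists>y. ((\<lambda>x. \<psi> x - \<psi>1 0 * x - k * x\<^sup>2 / 2) has_real_derivative y) (at x) \<and> y \<ge> 0" by blast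
  qed
  have h\<sigma>: "\<psi>1 \<sigma> \<ge> \<psi>1 0 + k * \<sigma>" using h[of \<sigma>] \<sigma> by simp
  have g2: "(\<lambda>x. \<psi> x - (\<psi>1 0 + k * \<sigma>) * x) \<sigma> \<le> (\<lambda>x. \<psi> x - (\<psi>1 0 + k * \<sigma>) * x) 1"
  proof (rule DERIV_nonneg_imp_nondecreasing[OF \<sigma>(2)])
    fix x assume x: "\<sigma> \<le> x" "x \<le> 1"
    have "((\<lambda>x. \<psi> x - (\<psi>1 0 + k * \<sigma>) * x) has_real_derivative \<psi>1 x - (\<psi>1 0 + k * \<sigma>)) (at x)"
      by (auto intro!: derivative_eq_intros d1)
    moreover have "\<psi>1 x - (\<psi>1 0 + k * \<sigma>) \<ge> 0" using mono1[OF x(1)] h\<sigma> by linarith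
    ultimately show "\<exists>y. ((\<lambda>x. \<psi> x - (\<psi>1 0 + k * \<sigma>) * x) has_real_derivative y) (at x) \<and> y \<ge> 0" by blast
  qed
  have "k * \<sigma> * (1 - \<sigma>) \<ge> 0" using k \<sigma> by simp
  then show ?thesis using g g2 by (simp add: power2_eq_square algebra_simps)
qed



lemma cubic_rewrite:
  "(\<Sum>c\<in>UNIV. vc u c * (\<Sum>c'\<in>UNIV. vc u c' * (\<Sum>c0\<in>UNIV. vc u c0 * Th c0 c' c)))
   = (\<Sum>t\<in>UNIV. tri (\<lambda>j c c'. Th (t,j) c c') (u $ t) (u::real^'b::finite^'e::finite) u)"
proof -
  have "(\<Sum>c\<in>UNIV. vc u c * (\<Sum>c'\<in>UNIV. vc u c' * (\<Sum>c0\<in>UNIV. vc u c0 * Th c0 c' c)))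
     = (\<Sum>c\<in>UNIV. \<Sum>c'\<in>UNIV. \<Sum>c0\<in>UNIV. vc u c * vc u c' * vc u c0 * Th c0 c' c)"
    by (simp add: sum_distrib_left mult_ac)
  also have "\<dots> = (\<Sum>c\<in>UNIV. \<Sum>c0\<in>UNIV. \<Sum>c'\<in>UNIV. vc u c * vc u c' * vc u c0 * Th c0 c' c)"
    by (rule sum.cong[OF refl], rule sum.swap)
  also have "\<dots> = (\<Sum>c0\<in>UNIV. \<Sum>c\<in>UNIV. \<Sum>c'\<in>UNIV. vc u c * vc u c' * vc u c0 * Th c0 c' c)"
    by (rule sum.swap)
  also have "\<dots> = (\<Sum>c0\<in>UNIV. \<Sum>c'\<in>UNIV. \<Sum>c\<in>UNIV. vc u c * vc u c' * vc u c0 * Th c0 c' c)"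
    by (rule sum.cong[OF refl], rule sum.swap)
  also have "\<dots> = (\<Sum>t\<in>UNIV. \<Sum>j\<in>UNIV. \<Sum>c'\<in>UNIV. \<Sum>c\<in>UNIV. vc u c * vc u c' * vc u (t,j) * Th (t,j) c' c)"
    by (rule sum_UNIV_pair)
  also have "\<dots> = (\<Sum>t\<in>UNIV. tri (\<lambda>j c c'. Th (t,j) c c') (u $ t) u u)"
    unfolding tri_def by (simp add: vc_def mult_ac)
  finally show ?thesis .
qed

lemma sum_norm_le_sqrt_card:
  assumes "finite S"
  shows "(\<Sum>t\<in>S. norm ((x::real^'b::finite^'e::finite) $ t)) \<le> sqrt (real (card S)) * norm x"
proof -
  have "(\<Sum>t\<in>S. \<bar>norm (x $ t)\<bar> * \<bar>1\<bar>) \<le> L2_set (\<lambda>t. norm (x $ t)) S * L2_set (\<lambda>t. 1) S"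
    by (rule L2_set_mult_ineq)
  moreover have "L2_set (\<lambda>t. 1::real) S = sqrt (real (card S))" by (simp add: L2_set_def)
  moreover have "L2_set (\<lambda>t. norm (x $ t)) S \<le> norm x"
    unfolding norm_vec_def L2_set_def by (intro real_sqrt_le_mono sum_mono2) auto
  ultimately have "(\<Sum>t\<in>S. norm (x $ t)) \<le> sqrt (real (card S)) * L2_set (\<lambda>t. norm (x $ t)) S"
    "L2_set (\<lambda>t. norm (x $ t)) S \<le> norm x" by (simp_all add: mult.commute)
  then show ?thesis by (meson mult_left_mono order_trans real_sqrt_ge_zero of_nat_0_le_iff)
qed

lemma norm_supp:
  assumes "\<forall>t. t \<notin> S \<longrightarrow> (x::real^'b::finite^'e::finite) $ t = 0"
  shows "norm x = sqrt (\<Sum>t\<in>S. (norm (x $ t))\<^sup>2)"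
proof -
  have "(\<Sum>t\<in>UNIV. (norm (x $ t))\<^sup>2) = (\<Sum>t\<in>S. (norm (x $ t))\<^sup>2)"
    using assms by (intro sum.mono_neutral_right) auto
  then show ?thesis unfolding norm_vec_def L2_set_def by simp
qed

lemma sum_supp:
  assumes "\<forall>t. t \<notin> S \<longrightarrow> (x::real^'b::finite^'e::finite) $ t = 0"
  shows "(\<Sum>t\<in>UNIV. norm (x $ t)) = (\<Sum>t\<in>S. norm (x $ t))"
  using assms by (intro sum.mono_neutral_right) auto

lemma grad_lin_bound:
  fixes G :: "'e::finite \<times> 'b::finite \<Rightarrow> real"
  assumes "\<forall>t. norm (\<chi> j. - G (t, j)) \<le> W"
  shows "\<bar>\<Sum>c\<in>UNIV. vc u c * G c\<bar> \<le> W * (\<Sum>t\<in>UNIV. norm (u $ t))"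
proof -
  have "(\<Sum>c\<in>UNIV. vc u c * G c) = - (\<Sum>t\<in>UNIV. (u $ t) \<bullet> (\<chi> j. - G (t, j)))"
    by (simp add: sum_UNIV_pair inner_vec_def vc_def sum_negf)
  then have "\<bar>\<Sum>c\<in>UNIV. vc u c * G c\<bar> \<le> (\<Sum>t\<in>UNIV. \<bar>(u $ t) \<bullet> (\<chi> j. - G (t, j))\<bar>)"
    by (simp add: sum_abs)
  also have "\<dots> \<le> (\<Sum>t\<in>UNIV. W * norm (u $ t))"
  proof (rule sum_mono)
    fix t
    have "\<bar>(u $ t) \<bullet> (\<chi> j. - G (t, j))\<bar> \<le> norm (u $ t) * norm (\<chi> j. - G (t, j))"
      by (rule Cauchy_Schwarz_ineq2)
    also have "\<dots> \<le> norm (u $ t) * W" using assms by (intro mult_left_mono) auto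
    finally show "\<bar>(u $ t) \<bullet> (\<chi> j. - G (t, j))\<bar> \<le> W * norm (u $ t)" by (simp add: mult.commute)
  qed
  finally show ?thesis by (simp add: sum_distrib_left)
qed

lemma cubic_bound:
  fixes u :: "real^'b::finite^'e::finite"
  assumes "\<forall>t. spec3 (\<lambda>j c c'. Th (t,j) c c') \<le> M"
  shows "\<bar>\<Sum>c\<in>UNIV. vc u c * (\<Sum>c'\<in>UNIV. vc u c' * (\<Sum>c0\<in>UNIV. vc u c0 * Th c0 c' c))\<bar>
     \<le> M * (\<Sum>t\<in>UNIV. norm (u $ t)) * (norm u)\<^sup>2"
proof -
  have "\<bar>\<Sum>t\<in>UNIV. tri (\<lambda>j c c'. Th (t,j) c c') (u $ t) u u\<bar> \<le> (\<Sum>t\<in>UNIV. \<bar>tri (\<lambda>j c c'. Th (t,j) c c') (u $ t) u u\<bar>)"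
    by (rule sum_abs)
  also have "\<dots> \<le> (\<Sum>t\<in>UNIV. M * norm (u $ t) * (norm u)\<^sup>2)"
  proof (rule sum_mono)
    fix t
    have "\<bar>tri (\<lambda>j c c'. Th (t,j) c c') (u $ t) u u\<bar> \<le> spec3 (\<lambda>j c c'. Th (t,j) c c') * norm (u $ t) * norm u * norm u"
      by (rule spec3_bound)
    also have "\<dots> \<le> M * norm (u $ t) * norm u * norm u"
      using assms by (intro mult_right_mono) auto
    finally show "\<bar>tri (\<lambda>j c c'. Th (t,j) c c') (u $ t) u u\<bar> \<le> M * norm (u $ t) * (norm u)\<^sup>2"
      by (simp add: power2_eq_square mult_ac)
  qed
  finally show ?thesis unfolding cubic_rewrite by (simp add: sum_distrib_left sum_distrib_right mult_ac)
qed

theorem lemma3: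
  fixes f :: "real^'m \<Rightarrow> real^'b^'e"
    and xp xq :: "nat \<Rightarrow> real^'m"
    and np nq :: nat
    and \<theta>s \<theta>h :: "real^'b^'e"
    and S :: "'e set"
    and d :: nat
    and lamn lam_min lam_max lam3_max :: real
  assumes E_shape: "\<exists>idx. bij_betw idx (UNIV :: 'e set) {(u, v). 1 \<le> v \<and> v \<le> u \<and> u \<le> CARD('m)}"
    and np_pos: "np \<ge> 1" and nq_pos: "nq \<ge> 1"
    and S_def: "S = {t. \<theta>s $ t \<noteq> 0}"
    and d_def: "d = card S"
    and A1_pos: "lam_min > 0"
    and A1: "\<forall>\<mu>\<in>block_eigenvalues (hess (loss f xp np xq nq) \<theta>s) S. \<mu> \<ge> lam_min"
    and A3: "\<forall>\<delta> :: real^'b^'e. norm \<delta> \<le> norm \<theta>s \<longrightarrow>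
               spec2 (hess (loss f xp np xq nq) (\<theta>s + \<delta>)) \<le> lam_max \<and>
               (\<forall>t. spec3 (\<lambda>j c c'. third (loss f xp np xq nq) (\<theta>s + \<delta>) (t, j) c c') \<le> lam3_max)"
    and hat_supp: "\<forall>t. t \<notin> S \<longrightarrow> \<theta>h $ t = 0"
    and hat_min: "\<forall>\<theta> :: real^'b^'e. (\<forall>t. t \<notin> S \<longrightarrow> \<theta> $ t = 0) \<longrightarrow>
               loss f xp np xq nq \<theta>h + lamn * (\<Sum>t\<in>S. norm (\<theta>h $ t))
                 \<le> loss f xp np xq nq \<theta> + lamn * (\<Sum>t\<in>S. norm (\<theta> $ t))"
    and lam_cond: "real d * lamn \<le> lam_min ^ 2 / (20 * lam3_max)"
    and w_cond: "\<forall>t. norm (\<chi> j. - grad (loss f xp np xq nq) \<theta>s (t, j)) \<le> lamn / 4"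
  shows "sqrt (\<Sum>t\<in>S. (norm (\<theta>s $ t - \<theta>h $ t))\<^sup>2) \<le> 10 / lam_min * sqrt (real d) * lamn"
proof -
  define L where "L = loss f xp np xq nq"
  define D where "D = \<theta>h - \<theta>s"
  define N where "N = norm D"
  define R where "R = norm \<theta>s"
  define sD where "sD = (\<Sum>t\<in>UNIV. norm (D $ t))"
  define a where "a = (\<Sum>t\<in>S. norm (\<theta>s $ t))"
  define Ph where "Ph = (\<Sum>t\<in>S. norm (\<theta>h $ t))"
  define B where "B = 10 / lam_min * sqrt (real d) * lamn"
  have finS: "finite S" by simp
  have sSupp: "\<forall>t. t \<notin> S \<longrightarrow> \<theta>s $ t = 0" using S_def by auto
  have dSupp: "\<forall>t. t \<notin> S \<longrightarrow> D $ t = 0" using sSupp hat_supp by (simp add: D_def)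
  have LHS: "sqrt (\<Sum>t\<in>S. (norm (\<theta>s $ t - \<theta>h $ t))\<^sup>2) = N"
    unfolding N_def norm_supp[OF dSupp] by (simp add: D_def norm_minus_commute)
  have lamn0: "lamn \<ge> 0"
    using w_cond[rule_format, of undefined] norm_ge_zero[of "\<chi> j. - grad (loss f xp np xq nq) \<theta>s (undefined, j)"]
    by linarith
  have lam3_0: "lam3_max \<ge> 0"
  proof -
    have "spec3 (\<lambda>j. third (loss f xp np xq nq) (\<theta>s + 0) (undefined, j)) \<le> lam3_max"
      using A3[rule_format, of 0] by simp
    then show ?thesis using spec3_nonneg[of "\<lambda>j. third (loss f xp np xq nq) (\<theta>s + 0) (undefined, j)"]
      by linarith
  qed
  show ?thesis
  proof (cases "d = 0")
    case True
    then have "S = {}" using d_def finS by simp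
    then show ?thesis using True by simp
  next
    case False
    then have dpos: "real d > 0" by simp
    then have sqd: "sqrt (real d) > 0" by simp
    have sqd2: "sqrt (real d) * sqrt (real d) = real d" by simp
    from False have "S \<noteq> {}" using d_def by auto
    then obtain t0 where "t0 \<in> S" by blast
    then have "\<theta>s $ t0 \<noteq> 0" using S_def by simp
    then have "\<theta>s \<noteq> 0" by auto
    then have Rpos: "R > 0" unfolding R_def by simp
    have sD_S: "sD = (\<Sum>t\<in>S. norm (D $ t))" unfolding sD_def by (rule sum_supp[OF dSupp])
    have sD_le: "sD \<le> sqrt (real d) * N"
      unfolding sD_S N_def d_def by (rule sum_norm_le_sqrt_card[OF finS])
    have sD0: "sD \<ge> 0" unfolding sD_def by (simp add: sum_nonneg)
    have a_le: "a \<le> sqrt (real d) * R"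
      unfolding a_def R_def d_def by (rule sum_norm_le_sqrt_card[OF finS])
    have tri1: "Ph \<ge> a - sD"
    proof -
      have "(\<Sum>t\<in>S. norm (\<theta>s $ t)) \<le> (\<Sum>t\<in>S. norm (\<theta>h $ t) + norm (D $ t))"
      proof (rule sum_mono)
        fix t have "\<theta>s $ t = \<theta>h $ t - D $ t" by (simp add: D_def)
        then show "norm (\<theta>s $ t) \<le> norm (\<theta>h $ t) + norm (D $ t)" by (metis norm_triangle_ineq4)
      qed
      then show ?thesis unfolding a_def Ph_def sD_S sum.distrib by linarith
    qed
    have tri2: "Ph \<ge> sD - a"
    proof -
      have "(\<Sum>t\<in>S. norm (D $ t)) \<le> (\<Sum>t\<in>S. norm (\<theta>h $ t) + norm (\<theta>s $ t))"
      proof (rule sum_mono)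
        fix t have "D $ t = \<theta>h $ t - \<theta>s $ t" by (simp add: D_def)
        then show "norm (D $ t) \<le> norm (\<theta>h $ t) + norm (\<theta>s $ t)" by (metis norm_triangle_ineq4)
      qed
      then show ?thesis unfolding a_def Ph_def sD_S sum.distrib by linarith
    qed
    have hat: "L \<theta>h + lamn * Ph \<le> L \<theta>s + lamn * a"
      using hat_min sSupp unfolding L_def Ph_def a_def by blast
    define \<psi> where "\<psi> s = L (\<theta>s + s *\<^sub>R D)" for s
    define \<psi>1 where "\<psi>1 s = (\<Sum>c\<in>UNIV. vc D c * grad L (\<theta>s + s *\<^sub>R D) c)" for s
    define \<psi>2 where "\<psi>2 s = (\<Sum>c\<in>UNIV. vc D c * (\<Sum>c'\<in>UNIV. vc D c' * hess L (\<theta>s + s *\<^sub>R D) c' c))" for s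
    define \<psi>3 where "\<psi>3 s = (\<Sum>c\<in>UNIV. vc D c * (\<Sum>c'\<in>UNIV. vc D c' * (\<Sum>c0\<in>UNIV. vc D c0 * third L (\<theta>s + s *\<^sub>R D) c0 c' c)))" for s
    have d1: "(\<psi> has_real_derivative \<psi>1 s) (at s)" for s
      unfolding \<psi>_def[abs_def] \<psi>1_def L_def by (rule psi1[OF nq_pos])
    have d2: "(\<psi>1 has_real_derivative \<psi>2 s) (at s)" for s
      unfolding \<psi>1_def[abs_def] \<psi>2_def L_def by (rule psi2[OF nq_pos])
    have d3: "(\<psi>2 has_real_derivative \<psi>3 s) (at s)" for s
      unfolding \<psi>2_def[abs_def] \<psi>3_def L_def by (rule psi3[OF nq_pos])
    have hessHH: "hess L z = HH f xq nq z" for z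
      unfolding L_def by (intro ext) (rule hess_eq[OF nq_pos])
    have cvx: "\<psi>2 s \<ge> 0" for s
      unfolding \<psi>2_def hessHH by (rule quad_HH_nonneg[OF nq_pos])
    have symH: "hess L z c c' = hess L z c' c" for z c c'
      unfolding hessHH HH_def Nq2_def by (simp add: mult_ac)
    have psi2_0: "\<psi>2 0 \<ge> lam_min * N\<^sup>2"
    proof -
      have "bform (hess L \<theta>s) D D \<ge> lam_min * (norm D)\<^sup>2"
        by (rule eig_bound[OF symH]) (use A1 dSupp in \<open>simp_all add: L_def\<close>)
      then show ?thesis unfolding \<psi>2_def bform_def N_def by simp
    qed
    have psi3_bd: "\<bar>\<psi>3 s\<bar> \<le> lam3_max * sD * N\<^sup>2" if "\<bar>s\<bar> * N \<le> R" for s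
    proof -
      have "norm (s *\<^sub>R D) \<le> norm \<theta>s" using that by (simp add: N_def R_def)
      from A3[rule_format, OF this]
      have "\<forall>t. spec3 (\<lambda>j c c'. third L (\<theta>s + s *\<^sub>R D) (t, j) c c') \<le> lam3_max"
        unfolding L_def by blast
      from cubic_bound[OF this, of D] show ?thesis unfolding \<psi>3_def sD_def N_def .
    qed
    have g0: "\<psi>1 0 \<ge> - (lamn / 4) * sD"
    proof -
      have "\<bar>\<Sum>c\<in>UNIV. vc D c * grad L \<theta>s c\<bar> \<le> lamn / 4 * (\<Sum>t\<in>UNIV. norm (D $ t))"
        by (rule grad_lin_bound) (use w_cond in \<open>simp add: L_def\<close>)
      then show ?thesis unfolding \<psi>1_def sD_def by simp
    qed
    have psi01: "\<psi> 1 = L \<theta>h" "\<psi> 0 = L \<theta>s" unfolding \<psi>_def D_def by simp_all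
    have key: "L \<theta>h - L \<theta>s \<ge> \<psi>1 0 + lam_min * N * r / 4"
      if r: "0 < r" "r \<le> R" "r \<le> N" "sqrt (real d) * lam3_max * r \<le> lam_min / 2" for r
    proof -
      have Npos: "N > 0" using r by linarith
      define \<sigma> where "\<sigma> = r / N"
      have \<sigma>: "0 \<le> \<sigma>" "\<sigma> \<le> 1" using r Npos by (auto simp: \<sigma>_def)
      have \<sigma>N: "\<sigma> * N = r" using Npos by (simp add: \<sigma>_def)
      define k where "k = lam_min * N\<^sup>2 / 2"
      have k0: "k \<ge> 0" using A1_pos by (simp add: k_def)
      have kb: "\<psi>2 s \<ge> k" if s: "0 \<le> s" "s \<le> \<sigma>" for s
      proof -
        have "\<psi>2 s \<ge> \<psi>2 0 - (lam3_max * sD * N\<^sup>2) * s"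
        proof (rule lower_from_deriv[OF d3 _ s])
          fix x assume x: "0 \<le> x" "x \<le> \<sigma>"
          have "\<bar>x\<bar> * N \<le> \<sigma> * N" using x Npos by (simp add: mult_right_mono)
          then show "\<bar>\<psi>3 x\<bar> \<le> lam3_max * sD * N\<^sup>2" using psi3_bd \<sigma>N r by simp
        qed
        moreover have "(lam3_max * sD * N\<^sup>2) * s \<le> (lam3_max * (sqrt (real d) * N) * N\<^sup>2) * \<sigma>"
          using s lam3_0 sD_le sD0 by (intro mult_mono mult_right_mono mult_left_mono) auto
        moreover have "(lam3_max * (sqrt (real d) * N) * N\<^sup>2) * \<sigma> = (sqrt (real d) * lam3_max * r) * N\<^sup>2"
          using \<sigma>N by (simp add: algebra_simps power2_eq_square)
        moreover have "(sqrt (real d) * lam3_max * r) * N\<^sup>2 \<le> (lam_min / 2) * N\<^sup>2"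
          using r(4) by (intro mult_right_mono) auto
        ultimately show ?thesis using psi2_0 unfolding k_def by linarith
      qed
      from core1d[OF d1 d2 cvx \<sigma> k0 kb]
      have "\<psi> 1 - \<psi> 0 \<ge> \<psi>1 0 + k * \<sigma> / 2" .
      moreover have "k * \<sigma> / 2 = lam_min * N * r / 4"
        using Npos by (simp add: k_def \<sigma>_def power2_eq_square field_simps)
      ultimately show ?thesis using psi01 by simp
    qed
    have upper: "L \<theta>h - L \<theta>s \<le> lamn * (a - Ph)" using hat by (simp add: algebra_simps)
    show ?thesis
    proof (rule ccontr)
      assume "\<not> ?thesis"
      then have NB: "N > B" using LHS B_def by simp
      show False
      proof (cases "lamn = 0")
        case True
        then have B0: "B = 0" by (simp add: B_def)
        define r where "r = min R (min N (lam_min / (2 * sqrt (real d) * lam3_max + 1)))"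
        have den: "2 * sqrt (real d) * lam3_max + 1 > 0" proof -
          have "2 * sqrt (real d) * lam3_max \<ge> 0" using lam3_0 by simp
          then show ?thesis by linarith
        qed
        have rpos: "r > 0" using Rpos NB B0 den A1_pos by (simp add: r_def)
        have "sqrt (real d) * lam3_max * r \<le> sqrt (real d) * lam3_max * (lam_min / (2 * sqrt (real d) * lam3_max + 1))"
          using sqd lam3_0 by (intro mult_left_mono) (auto simp: r_def)
        also have "\<dots> \<le> lam_min / 2"
          using den A1_pos sqd lam3_0 by (simp add: field_simps)
        finally have rc: "sqrt (real d) * lam3_max * r \<le> lam_min / 2" .
        have "L \<theta>h - L \<theta>s \<ge> \<psi>1 0 + lam_min * N * r / 4"
          by (rule key[OF rpos _ _ rc]) (auto simp: r_def)
        moreover have "lam_min * N * r / 4 > 0" using A1_pos NB B0 rpos by simp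
        ultimately show False using upper g0 True by simp
      next
        case False
        then have lp: "lamn > 0" using lamn0 by simp
        have lB: "lam_min * B = 10 * sqrt (real d) * lamn" using A1_pos by (simp add: B_def)
        have Bpos: "B > 0" using lp sqd A1_pos by (simp add: B_def)
        have cB: "sqrt (real d) * lam3_max * B \<le> lam_min / 2"
        proof (cases "lam3_max = 0")
          case True then show ?thesis using A1_pos by simp
        next
          case False
          then have l3: "lam3_max > 0" using lam3_0 by simp
          have c1: "real d * lamn * (20 * lam3_max) \<le> lam_min\<^sup>2"
            using lam_cond l3 by (simp add: field_simps)
          have "sqrt (real d) * lam3_max * B = 10 * (real d * lamn * lam3_max) / lam_min"
            using sqd2 by (simp add: B_def field_simps)
          also have "\<dots> = (real d * lamn * (20 * lam3_max)) / (2 * lam_min)"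
            using A1_pos by (simp add: field_simps)
          also have "\<dots> \<le> lam_min\<^sup>2 / (2 * lam_min)"
            using c1 A1_pos by (intro divide_right_mono) auto
          also have "\<dots> = lam_min / 2"
            using A1_pos by (simp add: power2_eq_square)
          finally show ?thesis .
        qed
        have X: "lamn * sD \<le> sqrt (real d) * lamn * N"
          using sD_le lp by (simp add: mult_left_mono mult.assoc mult.left_commute)
        have Xpos: "sqrt (real d) * lamn * N > 0" using sqd lp NB Bpos by simp
        show False
        proof (cases "B \<le> R")
          case True
          have "L \<theta>h - L \<theta>s \<ge> \<psi>1 0 + lam_min * N * B / 4"
            by (rule key[OF Bpos True _ cB]) (use NB in simp)
          moreover have "lam_min * N * B = 10 * (sqrt (real d) * lamn * N)" using lB by (simp add: mult_ac)
          moreover have "lamn * (a - Ph) \<le> lamn * sD" using tri1 lp by (simp add: mult_left_mono)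
          ultimately show False using upper g0 X Xpos by linarith
        next
          case False
          have "L \<theta>h - L \<theta>s \<ge> \<psi>1 0 + lam_min * N * R / 4"
          proof (rule key[OF Rpos order_refl])
            show "R \<le> N" using NB False by simp
            have "sqrt (real d) * lam3_max * R \<le> sqrt (real d) * lam3_max * B"
              using False lam3_0 sqd by (intro mult_left_mono) auto
            then show "sqrt (real d) * lam3_max * R \<le> lam_min / 2" using cB by linarith
          qed
          moreover have "lam_min * N * R > lam_min * B * R"
            using NB Rpos A1_pos by simp
          moreover have "lam_min * B * R = 10 * (sqrt (real d) * lamn * R)" using lB by simp
          moreover have "L \<theta>h - L \<theta>s \<le> 2 * (lamn * a) - lamn * sD"
          proof -
            have "lamn * (a - Ph) \<le> lamn * (2 * a - sD)" using tri2 lp by (intro mult_left_mono) auto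
            then show ?thesis using upper by (simp add: algebra_simps)
          qed
          moreover have "lamn * a \<le> sqrt (real d) * lamn * R" using a_le lp
            by (simp add: mult_left_mono mult.assoc mult.left_commute)
          moreover have "sqrt (real d) * lamn * R > 0" using sqd lp Rpos by simp
          moreover have "lamn * sD \<ge> 0" using lp sD0 by simp
          moreover have "\<psi>1 0 \<ge> - (lamn * sD) / 4" using g0 by simp
          ultimately show False by linarith
        qed
      qed
    qed
  qed
qed

end
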